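(* Let $\delta\in(0,1)$. For any $\lambda\in G_\delta$ and any contraction $T$ on a Hilbert space $\mathcal{M}$, the operator $1-\tfrac12\lambda T^*$ is invertible, so that $\lambda_T=(\delta T^*-\tfrac12\lambda)(1-\tfrac12\lambda T^* )^{-1}$ is a well-defined bounded operator on $\mathcal{M}$, and $\|\lambda_T\|<1$. Moreover, for a contraction $T$ on $\mathcal{M}$, the map $G_\delta\to\mathcal{B}(\mathcal{M})$, $\lambda\mapsto\lambda_T$, is holomorphic on $G_\delta$.
   Context: $G_\delta=\{x+iy: x,y\in\mathbb{R},\ \frac{x^2}{(1+\delta)^2}+\frac{y^2}{(1-\delta)^2}<1\}$. *)

theory Defs
  imports "HOL-Analysis.Analysis"
begin

text \<open>Complex Hilbert spaces: the library only has real inner product spaces, so we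
  introduce a class of complex Hilbert spaces.  The inner product is conjugate-linear
  in the first and linear in the second argument, the norm is the one induced by the
  inner product, and the space is complete.\<close>

class chilbert = real_normed_vector + complete_space +
  fixes scaleC :: "complex \<Rightarrow> 'a \<Rightarrow> 'a"
    and cinner :: "'a \<Rightarrow> 'a \<Rightarrow> complex"
  assumes scaleC_add_right: "scaleC c (x + y) = scaleC c x + scaleC c y"
    and scaleC_add_left: "scaleC (b + c) x = scaleC b x + scaleC c x"
    and scaleC_scaleC: "scaleC b (scaleC c x) = scaleC (b * c) x"
    and scaleC_of_real: "scaleC (complex_of_real r) x = scaleR r x"
    and cinner_cnj: "cinner x y = cnj (cinner y x)"
    and cinner_add_left: "cinner (x + y) z = cinner x z + cinner y z"
    and cinner_scaleC_left: "cinner (scaleC c x) y = cnj c * cinner x y"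
    and norm_cinner: "norm x = sqrt (Re (cinner x x))"

text \<open>A bounded operator on the Hilbert space: a bounded (real-)linear map that is
  moreover complex linear.\<close>
definition is_cbounded :: "('a::chilbert \<Rightarrow>\<^sub>L 'a) \<Rightarrow> bool" where
  "is_cbounded T \<longleftrightarrow> (\<forall>c x. blinfun_apply T (scaleC c x) = scaleC c (blinfun_apply T x))"

definition is_contraction :: "('a::chilbert \<Rightarrow>\<^sub>L 'a) \<Rightarrow> bool" where
  "is_contraction T \<longleftrightarrow> is_cbounded T \<and> norm T \<le> 1"

definition adj :: "('a::chilbert \<Rightarrow>\<^sub>L 'a) \<Rightarrow> ('a \<Rightarrow>\<^sub>L 'a)" where
  "adj T = (THE S. \<forall>x y. cinner (blinfun_apply S x) y = cinner x (blinfun_apply T y))"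

definition opscale :: "complex \<Rightarrow> ('a::chilbert \<Rightarrow>\<^sub>L 'a) \<Rightarrow> ('a \<Rightarrow>\<^sub>L 'a)" where
  "opscale c A = Blinfun (\<lambda>x. scaleC c (blinfun_apply A x))"

definition op_invertible :: "('a::chilbert \<Rightarrow>\<^sub>L 'a) \<Rightarrow> bool" where
  "op_invertible A \<longleftrightarrow> (\<exists>B. B o\<^sub>L A = id_blinfun \<and> A o\<^sub>L B = id_blinfun)"

definition op_inv :: "('a::chilbert \<Rightarrow>\<^sub>L 'a) \<Rightarrow> ('a \<Rightarrow>\<^sub>L 'a)" where
  "op_inv A = (THE B. B o\<^sub>L A = id_blinfun \<and> A o\<^sub>L B = id_blinfun)"

definition G :: "real \<Rightarrow> complex set" where
  "G \<delta> = {z. (Re z)\<^sup>2 / (1 + \<delta>)\<^sup>2 + (Im z)\<^sup>2 / (1 - \<delta>)\<^sup>2 < 1}"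

definition lamT :: "real \<Rightarrow> complex \<Rightarrow> ('a::chilbert \<Rightarrow>\<^sub>L 'a) \<Rightarrow> ('a \<Rightarrow>\<^sub>L 'a)" where
  "lamT \<delta> l T = (opscale (complex_of_real \<delta>) (adj T) - opscale (l / 2) id_blinfun)
      o\<^sub>L op_inv (id_blinfun - opscale (l / 2) (adj T))"

definition op_holomorphic_on :: "(complex \<Rightarrow> ('a::chilbert \<Rightarrow>\<^sub>L 'a)) \<Rightarrow> complex set \<Rightarrow> bool" where
  "op_holomorphic_on f S \<longleftrightarrow>
     (\<forall>z\<in>S. \<exists>D. ((\<lambda>w. opscale (inverse (w - z)) (f w - f z)) \<longlongrightarrow> D) (at z))"

end

theory Submission
  imports Defs
begin

lemma scaleC_one_aux: "scaleC (1::complex) (x::'a::chilbert) = x"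
  using scaleC_of_real[of 1 x] by simp

interpretation cv: vector_space "scaleC :: complex \<Rightarrow> 'a::chilbert \<Rightarrow> 'a"
  by unfold_locales (auto simp: scaleC_add_right scaleC_add_left scaleC_scaleC scaleC_one_aux)

lemma scaleC_scaleR: "scaleC c (scaleR r (x::'a::chilbert)) = scaleR r (scaleC c x)"
  by (simp only: scaleC_of_real[symmetric] scaleC_scaleC mult.commute)

lemma scaleC_of_real': "scaleC (of_real r) (x::'a::chilbert) = scaleR r x"
  by (rule scaleC_of_real)

lemma cnj_cinner: "cnj (cinner y x) = cinner x (y::'a::chilbert)"
  by (rule cinner_cnj[symmetric])

lemma cinner_add_right: "cinner (x::'a::chilbert) (y + z) = cinner x y + cinner x z"
proof -
  have "cinner x (y+z) = cnj (cinner (y+z) x)" by (rule cinner_cnj)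
  also have "\<dots> = cnj (cinner y x) + cnj (cinner z x)" by (simp add: cinner_add_left)
  finally show ?thesis by (simp only: cnj_cinner)
qed

lemma cinner_scaleC_right: "cinner (x::'a::chilbert) (scaleC c y) = c * cinner x y"
proof -
  have "cinner x (scaleC c y) = cnj (cinner (scaleC c y) x)" by (rule cinner_cnj)
  also have "\<dots> = c * cnj (cinner y x)" by (simp add: cinner_scaleC_left)
  finally show ?thesis by (simp only: cnj_cinner)
qed

lemma cinner_zero_left[simp]: "cinner 0 (y::'a::chilbert) = 0"
  using cinner_add_left[of 0 0 y] by simp

lemma cinner_zero_right[simp]: "cinner (x::'a::chilbert) 0 = 0"
  using cinner_add_right[of x 0 0] by simp

lemma cinner_minus_left: "cinner (- x) (y::'a::chilbert) = - cinner x y"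
proof -
  have "cinner x y + cinner (-x) y = 0" using cinner_add_left[of x "-x" y] by simp
  then show ?thesis using neg_eq_iff_add_eq_0 by metis
qed

lemma cinner_minus_right: "cinner x (- y::'a::chilbert) = - cinner x y"
proof -
  have "cinner x y + cinner x (-y) = 0" using cinner_add_right[of x y "-y"] by simp
  then show ?thesis using neg_eq_iff_add_eq_0 by metis
qed

lemma cinner_diff_left: "cinner (x - z) (y::'a::chilbert) = cinner x y - cinner z y"
  using cinner_add_left[of x "-z" y] by (simp add: cinner_minus_left)

lemma cinner_diff_right: "cinner x (y - z::'a::chilbert) = cinner x y - cinner x z"
  using cinner_add_right[of x y "-z"] by (simp add: cinner_minus_right)

lemma cinner_self_real: "cinner x (x::'a::chilbert) = of_real ((norm x)^2)"
proof -
  have im: "Im (cinner x x) = 0"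
    using arg_cong[OF cinner_cnj[of x x], where f=Im] by simp
  have "Re (cinner x x) \<ge> 0"
  proof (rule ccontr)
    assume "\<not> ?thesis"
    then have "sqrt (Re (cinner x x)) < 0" by simp
    then show False using norm_cinner[of x] norm_ge_zero[of x] by linarith
  qed
  then have "(norm x)^2 = Re (cinner x x)" using norm_cinner[of x] by simp
  then show ?thesis using im by (simp add: complex_eq_iff)
qed

lemma Re_cinner_self: "Re (cinner x (x::'a::chilbert)) = (norm x)^2"
  by (simp add: cinner_self_real)

lemma norm_scaleC: "norm (scaleC c (x::'a::chilbert)) = cmod c * norm x"
proof -
  have "cinner (scaleC c x) (scaleC c x) = cnj c * c * cinner x x"
    by (simp add: cinner_scaleC_left cinner_scaleC_right)
  also have "cnj c * c = of_real ((cmod c)^2)"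
    by (simp add: complex_mult_cnj cmod_power2 mult.commute)
  finally have "(norm (scaleC c x))^2 = (cmod c)^2 * (norm x)^2"
    by (simp only: cinner_self_real of_real_mult[symmetric] of_real_eq_iff)
  then have "(norm (scaleC c x))^2 = (cmod c * norm x)^2"
    by (simp only: power_mult_distrib)
  then show ?thesis
    by (rule power2_eq_imp_eq) auto
qed

lemma cinner_expand:
  "Re (cinner (a + b) (a + (b::'a::chilbert))) = (norm a)^2 + (norm b)^2 + 2 * Re (cinner a b)"
proof -
  have "cinner (a + b) (a + b) = cinner a a + cinner b b + cinner a b + cinner b a"
    by (simp add: cinner_add_left cinner_add_right)
  moreover have "Re (cinner b a) = Re (cinner a b)"
    using arg_cong[OF cinner_cnj[of b a], where f=Re] by simp
  ultimately show ?thesis by (simp add: Re_cinner_self)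
qed

lemma norm_add_sq:
  "(norm (a + (b::'a::chilbert)))^2 = (norm a)^2 + (norm b)^2 + 2 * Re (cinner a b)"
  using cinner_expand[of a b] by (simp add: Re_cinner_self)

lemma cauchy_schwarz: "cmod (cinner x y) \<le> norm x * norm (y::'a::chilbert)"
proof (cases "y = 0")
  case True then show ?thesis by simp
next
  case False
  then have ny: "norm y > 0" by simp
  define t where "t = - cinner y x / of_real ((norm y)^2)"
  have "0 \<le> (norm (x + scaleC t y))^2" by simp
  also have "\<dots> = (norm x)^2 + (cmod t)^2 * (norm y)^2 + 2 * Re (t * cinner x y)"
    by (simp add: norm_add_sq norm_scaleC cinner_scaleC_right power_mult_distrib)
  also have "t * cinner x y = - of_real ((cmod (cinner x y))^2 / (norm y)^2)"
    unfolding t_def using ny cinner_cnj[of y x]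
    by (simp add: complex_mult_cnj cmod_power2 mult.commute)
  also have "(cmod t)^2 = (cmod (cinner x y))^2 / (norm y)^2 ^ 2"
    unfolding t_def using ny cinner_cnj[of y x]
    by (simp add: norm_divide power_divide norm_power)
  finally have h: "0 \<le> (norm x)^2 + (cmod (cinner x y))^2 / ((norm y)^2)^2 * (norm y)^2
      - 2 * ((cmod (cinner x y))^2 / (norm y)^2)" by simp
  have e: "(cmod (cinner x y))^2 / ((norm y)^2)^2 * (norm y)^2 = (cmod (cinner x y))^2 / (norm y)^2"
    using ny by (simp add: power2_eq_square)
  have "(cmod (cinner x y))^2 / (norm y)^2 \<le> (norm x)^2" using h e by linarith
  then have "(cmod (cinner x y))^2 \<le> (norm x)^2 * (norm y)^2"
    using ny by (simp add: pos_divide_le_eq)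
  then have "(cmod (cinner x y))^2 \<le> (norm x * norm y)^2"
    by (simp add: power_mult_distrib)
  then show ?thesis
    by (rule power2_le_imp_le) simp
qed

lemma cinner_eq_zero_imp: "(\<And>y. cinner e (y::'a::chilbert) = 0) \<Longrightarrow> e = 0"
proof -
  assume H: "\<And>y. cinner e (y::'a::chilbert) = 0"
  have "(norm e)^2 = Re (cinner e e)" by (simp add: Re_cinner_self)
  also have "\<dots> = 0" using H[of e] by simp
  finally show "e = 0" by simp
qed

lemma cinner_ext: "(\<And>y. cinner a (y::'a::chilbert) = cinner b y) \<Longrightarrow> a = b"
  using cinner_eq_zero_imp[of "a - b"] by (simp add: cinner_diff_left)

lemma riesz:
  fixes \<phi> :: "'a::chilbert \<Rightarrow> complex"
  assumes add: "\<And>x y. \<phi> (x + y) = \<phi> x + \<phi> y"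
    and hom: "\<And>c x. \<phi> (scaleC c x) = c * \<phi> x"
    and bnd: "\<And>x. cmod (\<phi> x) \<le> K * norm x"
  shows "\<exists>v. \<forall>y. \<phi> y = cinner v y"
proof -
  have scR: "\<phi> (scaleR r x) = of_real r * \<phi> x" for r x
    using hom[of "of_real r" x] by (simp add: scaleC_of_real)
  have bl: "bounded_linear \<phi>"
    by (rule bounded_linear_intro[where K=K]) (auto simp: add scR scaleR_conv_of_real bnd mult.commute)
  have phi0: "\<phi> 0 = 0" using add[of 0 0] by simp
  have phidiff: "\<phi> (x - y) = \<phi> x - \<phi> y" for x y
    using add[of "x - y" y] by simp
  show ?thesis
  proof (cases "\<forall>y. \<phi> y = 0")
    case True
    then show ?thesis by (intro exI[of _ 0]) simp
  next
    case False
    then obtain y0 where y0: "\<phi> y0 \<noteq> 0" by blast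
    define H where "H = {y. \<phi> y = 1}"
    have w0: "scaleC (inverse (\<phi> y0)) y0 \<in> H"
      using y0 by (simp add: H_def hom)
    define d where "d = Inf ((\<lambda>y. (norm y)^2) ` H)"
    have bdd: "bdd_below ((\<lambda>y. (norm y)^2) ` H)"
      by (rule bdd_belowI[where m=0]) auto
    have dle: "d \<le> (norm y)^2" if "y \<in> H" for y
      unfolding d_def using bdd that by (auto intro: cInf_lower)
    have ex: "\<exists>y\<in>H. (norm y)^2 < d + 1 / real (Suc n)" for n
    proof -
      have "Inf ((\<lambda>y. (norm y)^2) ` H) < d + 1 / real (Suc n)"
        unfolding d_def by simp
      then obtain z where "z \<in> (\<lambda>y. (norm y)^2) ` H" "z < d + 1 / real (Suc n)"
        using cInf_lessD[of "(\<lambda>y. (norm y)^2) ` H"] w0 by blast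
      then show ?thesis by blast
    qed
    then obtain Y where Y: "\<And>n. Y n \<in> H" "\<And>n. (norm (Y n))^2 < d + 1 / real (Suc n)"
      by metis
    have mid: "scaleR (1/2) (a + b) \<in> H" if "a \<in> H" "b \<in> H" for a b
      using that by (simp add: H_def scR add)
    have par: "(norm (a - b))^2 = 2*(norm a)^2 + 2*(norm b)^2 - (norm (a+b))^2" for a b :: 'a
    proof -
      have "(norm (a + - b))^2 = (norm a)^2 + (norm b)^2 + 2 * Re (cinner a (-b))"
        by (rule norm_add_sq[of a "-b", simplified norm_minus_cancel])
      moreover have "(norm (a + b))^2 = (norm a)^2 + (norm b)^2 + 2 * Re (cinner a b)"
        by (rule norm_add_sq)
      ultimately show ?thesis by (simp add: cinner_minus_right)
    qed
    have parH: "(norm (a - b))^2 \<le> 2*(norm a)^2 + 2*(norm b)^2 - 4 * d" if "a \<in> H" "b \<in> H" for a b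
    proof -
      have "(norm (a+b))^2 = 4 * (norm (scaleR (1/2) (a+b)))^2"
        by (simp add: power2_eq_square)
      moreover have "d \<le> (norm (scaleR (1/2) (a+b)))^2" using dle mid that by blast
      ultimately show ?thesis using par[of a b] by linarith
    qed
    have cauchy: "Cauchy Y"
    proof (rule metric_CauchyI)
      fix e :: real assume e: "e > 0"
      obtain M :: nat where M: "4 / e^2 < real M" using reals_Archimedean2 by blast
      have "4 < real M * e^2" using M e by (simp add: field_simps)
      moreover have "0 < e^2" using e by simp
      moreover have "real (Suc M) * e^2 = real M * e^2 + e^2" by (simp only: of_nat_Suc ring_distribs mult_1)
      ultimately have "4 < real (Suc M) * e^2" by linarith
      then have "4 / real (Suc M) < e^2" by (simp add: divide_less_eq mult.commute)
      show "\<exists>M. \<forall>m\<ge>M. \<forall>n\<ge>M. dist (Y m) (Y n) < e"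
      proof (intro exI allI impI)
        fix m n assume mn: "M \<le> m" "M \<le> n"
        have "(norm (Y m - Y n))^2 \<le> 2*(norm (Y m))^2 + 2*(norm (Y n))^2 - 4 * d"
          using parH Y by blast
        also have "\<dots> < 2 / real (Suc m) + 2 / real (Suc n)"
          using Y(2)[of m] Y(2)[of n] by linarith
        also have "\<dots> \<le> 2 / real (Suc M) + 2 / real (Suc M)"
          using mn by (intro add_mono divide_left_mono) auto
        also have "\<dots> < e^2" using \<open>4 / real (Suc M) < e^2\<close> by simp
        finally have "(norm (Y m - Y n))^2 < e^2" .
        then show "dist (Y m) (Y n) < e"
          using e by (simp add: dist_norm power_less_imp_less_base)
      qed
    qed
    then obtain u where u: "Y \<longlonglongrightarrow> u"
      using Cauchy_convergent_iff convergent_def by blast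
    have "(\<lambda>n. \<phi> (Y n)) \<longlonglongrightarrow> \<phi> u"
      by (rule bounded_linear.tendsto[OF bl u])
    moreover have "(\<lambda>n. \<phi> (Y n)) = (\<lambda>n. 1)" using Y(1) by (auto simp: H_def)
    ultimately have phiu: "\<phi> u = 1"
      using LIMSEQ_unique tendsto_const by metis
    have umin: "(norm u)^2 \<le> (norm y)^2" if yH: "y \<in> H" for y
    proof (rule LIMSEQ_le)
      show "(\<lambda>n. (norm (Y n))^2) \<longlonglongrightarrow> (norm u)^2"
        by (intro tendsto_intros u)
      show "(\<lambda>n. (norm y)^2 + 1 / real (Suc n)) \<longlonglongrightarrow> (norm y)^2"
        using tendsto_add[OF tendsto_const LIMSEQ_inverse_real_of_nat, of "(norm y)^2"]
        by (simp add: inverse_eq_divide)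
      show "\<exists>N. \<forall>n\<ge>N. (norm (Y n))^2 \<le> (norm y)^2 + 1 / real (Suc n)"
      proof (intro exI[of _ 0] allI impI)
        fix n :: nat
        show "(norm (Y n))^2 \<le> (norm y)^2 + 1 / real (Suc n)"
          using Y(2)[of n] dle[OF yH] by linarith
      qed
    qed
    have orth: "cinner u k = 0" if k: "\<phi> k = 0" for k
    proof -
      define a where "a = cinner u k"
      define s where "s = 1 / ((norm k)^2 + 1)"
      have pos: "0 < (norm k)^2 + 1" by (simp add: add_nonneg_pos)
      have s: "s > 0" "s * (norm k)^2 < 1"
        unfolding s_def using pos by (simp_all add: divide_less_eq)
      define t where "t = - of_real s * cnj a"
      have "u + scaleC t k \<in> H" using phiu k by (simp add: H_def add hom)
      then have "(norm u)^2 \<le> (norm (u + scaleC t k))^2" by (rule umin)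
      also have "\<dots> = (norm u)^2 + (cmod t)^2 * (norm k)^2 + 2 * Re (t * a)"
        by (simp add: norm_add_sq norm_scaleC cinner_scaleC_right power_mult_distrib a_def)
      also have "t * a = - of_real (s * (cmod a)^2)"
        unfolding t_def by (simp add: complex_mult_cnj cmod_power2 mult.commute)
      also have "cmod t = s * cmod a"
        unfolding t_def using s by (simp add: norm_mult)
      finally have "0 \<le> s^2 * (cmod a)^2 * (norm k)^2 - 2 * (s * (cmod a)^2)"
        by (simp add: power_mult_distrib)
      then have "0 \<le> s * ((cmod a)^2 * (s * (norm k)^2 - 2))"
        by (simp add: algebra_simps power2_eq_square)
      then have "0 \<le> (cmod a)^2 * (s * (norm k)^2 - 2)"
        using s by (simp add: zero_le_mult_iff)
      moreover have "s * (norm k)^2 - 2 < 0" using s by simp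
      ultimately have "(cmod a)^2 \<le> 0"
        by (simp add: zero_le_mult_iff)
      then show ?thesis unfolding a_def by simp
    qed
    have u0: "u \<noteq> 0" using phiu phi0 by auto
    then have nu: "(norm u)^2 > 0" by simp
    define v where "v = scaleC (of_real (1 / (norm u)^2)) u"
    show ?thesis
    proof (intro exI allI)
      fix y
      have "\<phi> (y - scaleC (\<phi> y) u) = 0" by (simp add: phidiff hom phiu)
      then have "cinner u (y - scaleC (\<phi> y) u) = 0" by (rule orth)
      then have "cinner u y = \<phi> y * cinner u u"
        by (simp add: cinner_diff_right cinner_scaleC_right)
      then have "cinner u y = \<phi> y * of_real ((norm u)^2)"
        by (simp add: cinner_self_real)
      then show "\<phi> y = cinner v y"
        using nu unfolding v_def by (simp add: cinner_scaleC_left)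
    qed
  qed
qed

lemma cinner_scaleR_left: "cinner (scaleR r x) (y::'a::chilbert) = of_real r * cinner x y"
  using cinner_scaleC_left[of "of_real r" x y] by (simp add: scaleC_of_real)

lemma adj_exists:
  fixes T :: "'a::chilbert \<Rightarrow>\<^sub>L 'a"
  assumes cb: "is_cbounded T"
  shows "\<exists>S. \<forall>x y. cinner (blinfun_apply S x) y = cinner x (blinfun_apply T y)"
proof -
  have ex: "\<exists>v. \<forall>y. cinner x (T y) = cinner v y" for x
  proof (rule riesz[where K="norm x * norm T"])
    show "cinner x (T (a + b)) = cinner x (T a) + cinner x (T b)" for a b
      by (simp add: blinfun.add_right cinner_add_right)
    show "cinner x (T (scaleC c a)) = c * cinner x (T a)" for c a
      using cb by (simp add: is_cbounded_def cinner_scaleC_right)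
    show "cmod (cinner x (T a)) \<le> norm x * norm T * norm a" for a
    proof -
      have "cmod (cinner x (T a)) \<le> norm x * norm (T a)" by (rule cauchy_schwarz)
      also have "\<dots> \<le> norm x * (norm T * norm a)"
        by (intro mult_left_mono norm_blinfun) simp
      finally show ?thesis by (simp add: mult.assoc)
    qed
  qed
  define s where "s x = (SOME v. \<forall>y. cinner x (T y) = cinner v y)" for x
  have s: "cinner (s x) y = cinner x (T y)" for x y
    using someI_ex[OF ex[of x]] unfolding s_def by metis
  have sadd: "s (a + b) = s a + s b" for a b
    by (rule cinner_ext) (simp add: s cinner_add_left)
  have sscale: "s (scaleR r a) = scaleR r (s a)" for r a
    by (rule cinner_ext) (simp add: s cinner_scaleR_left)
  have sbound: "norm (s x) \<le> norm x * norm T" for x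
  proof (cases "s x = 0")
    case True then show ?thesis by simp
  next
    case False
    have "(norm (s x))^2 = Re (cinner x (T (s x)))"
      using s[of x "s x"] by (simp add: Re_cinner_self[symmetric])
    also have "\<dots> \<le> cmod (cinner x (T (s x)))" by (rule complex_Re_le_cmod)
    also have "\<dots> \<le> norm x * norm (T (s x))" by (rule cauchy_schwarz)
    also have "\<dots> \<le> norm x * (norm T * norm (s x))"
      by (intro mult_left_mono norm_blinfun) simp
    finally have "norm (s x) * norm (s x) \<le> (norm x * norm T) * norm (s x)"
      by (simp add: power2_eq_square mult_ac)
    then show ?thesis using False by simp
  qed
  have bl: "bounded_linear s"
    by (rule bounded_linear_intro[where K="norm T"]) (auto simp: sadd sscale sbound)
  show ?thesis
    by (intro exI[of _ "Blinfun s"]) (simp add: bounded_linear_Blinfun_apply[OF bl] s)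
qed

lemma adj_char:
  fixes T :: "'a::chilbert \<Rightarrow>\<^sub>L 'a"
  assumes cb: "is_cbounded T"
  shows "cinner (blinfun_apply (adj T) x) y = cinner x (blinfun_apply T y)"
proof -
  have "\<exists>!S. \<forall>x y. cinner (blinfun_apply S x) y = cinner x (blinfun_apply T y)"
  proof (rule ex_ex1I)
    show "\<exists>S. \<forall>x y. cinner (blinfun_apply S x) y = cinner x (blinfun_apply T y)"
      by (rule adj_exists[OF cb])
    fix S1 S2 :: "'a \<Rightarrow>\<^sub>L 'a"
    assume "\<forall>x y. cinner (blinfun_apply S1 x) y = cinner x (blinfun_apply T y)"
      "\<forall>x y. cinner (blinfun_apply S2 x) y = cinner x (blinfun_apply T y)"
    then show "S1 = S2" by (intro blinfun_eqI cinner_ext) simp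
  qed
  from theI'[OF this] show ?thesis unfolding adj_def by blast
qed

lemma adj_cbounded:
  fixes T :: "'a::chilbert \<Rightarrow>\<^sub>L 'a"
  assumes cb: "is_cbounded T"
  shows "is_cbounded (adj T)"
  unfolding is_cbounded_def
  by (intro allI cinner_ext) (simp add: adj_char[OF cb] cinner_scaleC_left)

lemma norm_adj:
  fixes T :: "'a::chilbert \<Rightarrow>\<^sub>L 'a"
  assumes cb: "is_cbounded T"
  shows "norm (adj T) \<le> norm T"
proof (rule norm_blinfun_bound)
  show "0 \<le> norm T" by simp
  fix x
  show "norm (adj T x) \<le> norm T * norm x"
  proof (cases "adj T x = 0")
    case True then show ?thesis by simp
  next
    case False
    have "(norm (adj T x))^2 = Re (cinner x (T (adj T x)))"
      using adj_char[OF cb, of x "adj T x"] by (simp add: Re_cinner_self[symmetric])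
    also have "\<dots> \<le> cmod (cinner x (T (adj T x)))" by (rule complex_Re_le_cmod)
    also have "\<dots> \<le> norm x * norm (T (adj T x))" by (rule cauchy_schwarz)
    also have "\<dots> \<le> norm x * (norm T * norm (adj T x))"
      by (intro mult_left_mono norm_blinfun) simp
    finally have "norm (adj T x) * norm (adj T x) \<le> (norm T * norm x) * norm (adj T x)"
      by (simp add: power2_eq_square mult_ac)
    then show ?thesis using False by simp
  qed
qed

lemma real_key:
  fixes \<delta> p q s t Y R :: real
  assumes d: "0 < \<delta>" "\<delta> < 1"
    and Y: "0 \<le> R" "R \<le> Y"
    and st: "s^2 + t^2 \<le> (R * Y)^2"
    and ell: "4 * (1-\<delta>)^2 * p^2 + 4 * (1+\<delta>)^2 * q^2 < (1 - \<delta>^2)^2"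
    and mu: "1 - (p^2 + q^2) \<ge> h0" "1 + \<delta>^2 - 2 * (p^2 + q^2) \<ge> h0"
    and c: "c \<le> h0" "c \<le> 1 - \<delta>^2 - 2 * sqrt ((1-\<delta>)^2 * p^2 + (1+\<delta>)^2 * q^2)"
    and c0: "0 \<le> c"
  shows "c * Y^2 \<le> (1 - (p^2+q^2)) * Y^2 - (\<delta>^2 - (p^2+q^2)) * R^2
           - 2 * (1-\<delta>) * p * s + 2 * (1+\<delta>) * q * t"
proof -
  define m where "m = sqrt ((1-\<delta>)^2 * p^2 + (1+\<delta>)^2 * q^2)"
  define X where "X = (1-\<delta>) * p * s - (1+\<delta>) * q * t"
  define \<mu>2 where "\<mu>2 = p^2 + q^2"
  have m0: "0 \<le> m" unfolding m_def by simp
  have msq: "m^2 = (1-\<delta>)^2 * p^2 + (1+\<delta>)^2 * q^2" unfolding m_def by simp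
  have "X^2 \<le> ((1-\<delta>)^2 * p^2 + (1+\<delta>)^2 * q^2) * (s^2 + t^2)"
  proof -
    have "((1-\<delta>)^2 * p^2 + (1+\<delta>)^2 * q^2) * (s^2 + t^2) - X^2
          = ((1-\<delta>) * p * t + (1+\<delta>) * q * s)^2"
      unfolding X_def by (simp add: power2_eq_square algebra_simps)
    then show ?thesis by (metis diff_ge_0_iff_ge zero_le_power2)
  qed
  also have "\<dots> \<le> m^2 * (R * Y)^2"
    using st by (simp add: msq mult_left_mono)
  finally have "X^2 \<le> (m * (R * Y))^2" by (simp add: power_mult_distrib)
  have "\<bar>X\<bar> \<le> m * (R * Y)"
  proof (rule power2_le_imp_le)
    show "\<bar>X\<bar>^2 \<le> (m * (R * Y))^2" using \<open>X^2 \<le> (m * (R * Y))^2\<close> by (simp only: power2_abs)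
    have "0 \<le> R * Y" using Y by simp
    then show "0 \<le> m * (R * Y)" by (rule mult_nonneg_nonneg[OF m0])
  qed
  then have X: "X \<le> m * R * Y" by (simp add: mult.assoc)
  have "m^2 < ((1 - \<delta>^2) / 2)^2" using ell msq by (simp add: power_divide)
  moreover have "0 \<le> (1 - \<delta>^2) / 2" using d by (simp add: power_le_one)
  ultimately have "m < (1 - \<delta>^2) / 2" by (rule power2_less_imp_less)
  then have m2: "2 * m < 1 - \<delta>^2" by simp
  define \<epsilon> where "\<epsilon> = 1 - \<delta>^2 - 2 * m"
  have "(1 - \<mu>2) * Y^2 - (\<delta>^2 - \<mu>2) * R^2 - 2 * X
        \<ge> (1 - \<mu>2) * Y^2 - (\<delta>^2 - \<mu>2) * R^2 - 2 * (m * R * Y)"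
    using X by simp
  also have "(1 - \<mu>2) * Y^2 - (\<delta>^2 - \<mu>2) * R^2 - 2 * (m * R * Y)
      = (Y - R) * ((1 - \<mu>2) * Y + (\<delta>^2 - \<mu>2) * R) + \<epsilon> * R * Y"
    unfolding \<epsilon>_def by (simp add: power2_eq_square algebra_simps)
  finally have L: "(1 - \<mu>2) * Y^2 - (\<delta>^2 - \<mu>2) * R^2 - 2 * X
      \<ge> (Y - R) * ((1 - \<mu>2) * Y + (\<delta>^2 - \<mu>2) * R) + \<epsilon> * R * Y" .
  have B: "(1 - \<mu>2) * Y + (\<delta>^2 - \<mu>2) * R \<ge> c * Y"
  proof (cases "\<delta>^2 \<ge> \<mu>2")
    case True
    then have "(1 - \<mu>2) * Y + (\<delta>^2 - \<mu>2) * R \<ge> (1 - \<mu>2) * Y" using Y by simp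
    moreover have "(1 - \<mu>2) * Y \<ge> c * Y" using mu c Y unfolding \<mu>2_def
      by (intro mult_right_mono) auto
    ultimately show ?thesis by linarith
  next
    case False
    then have "(\<delta>^2 - \<mu>2) * R \<ge> (\<delta>^2 - \<mu>2) * Y" using Y
      by (intro mult_left_mono_neg) auto
    moreover have "(1 + \<delta>^2 - 2 * \<mu>2) * Y \<ge> c * Y" using mu c Y unfolding \<mu>2_def
      by (intro mult_right_mono) auto
    ultimately show ?thesis by (simp add: algebra_simps)
  qed
  have "(Y - R) * ((1 - \<mu>2) * Y + (\<delta>^2 - \<mu>2) * R) \<ge> (Y - R) * (c * Y)"
    using B Y by (intro mult_left_mono) auto
  moreover have "\<epsilon> * R * Y \<ge> c * R * Y"
    using c Y unfolding \<epsilon>_def m_def by (intro mult_right_mono) auto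
  ultimately have "(1 - \<mu>2) * Y^2 - (\<delta>^2 - \<mu>2) * R^2 - 2 * X \<ge> c * Y^2"
    using L by (simp add: power2_eq_square algebra_simps)
  then show ?thesis unfolding X_def \<mu>2_def by (simp add: algebra_simps)
qed

lemma opscale_bl: "bounded_linear (\<lambda>x. scaleC c (blinfun_apply (A::'a::chilbert \<Rightarrow>\<^sub>L 'a) x))"
proof (rule bounded_linear_intro[where K="cmod c * norm A"])
  show "scaleC c (A (x + y)) = scaleC c (A x) + scaleC c (A y)" for x y
    by (simp add: blinfun.add_right scaleC_add_right)
  show "scaleC c (A (r *\<^sub>R x)) = r *\<^sub>R scaleC c (A x)" for r x
    by (simp add: blinfun.scaleR_right scaleC_scaleR)
  show "norm (scaleC c (A x)) \<le> norm x * (cmod c * norm A)" for x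
  proof -
    have "cmod c * norm (A x) \<le> cmod c * (norm A * norm x)"
      by (intro mult_left_mono norm_blinfun) simp
    then show ?thesis by (simp add: norm_scaleC mult_ac)
  qed
qed

lemma opscale_apply[simp]: "blinfun_apply (opscale c A) x = scaleC c (blinfun_apply A x)"
  unfolding opscale_def by (simp add: bounded_linear_Blinfun_apply[OF opscale_bl])

lemma norm_opscale: "norm (opscale c (A::'a::chilbert \<Rightarrow>\<^sub>L 'a)) \<le> cmod c * norm A"
  by (rule norm_blinfun_bound) (auto simp: norm_scaleC mult.assoc intro!: mult_left_mono norm_blinfun)

lemma inv_exists:
  fixes M :: "'a::chilbert \<Rightarrow>\<^sub>L 'a"
  assumes k: "norm M < 1"
  shows "\<exists>B. B o\<^sub>L (id_blinfun - M) = id_blinfun \<and> (id_blinfun - M) o\<^sub>L B = id_blinfun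
             \<and> norm B \<le> 1 / (1 - norm M)"
proof -
  have inj: "x = y" if "x - M x = y - M y" for x y
  proof -
    have e: "x - y = M (x - y)" using that by (simp add: blinfun.diff_right algebra_simps)
    have "norm (x - y) = norm (M (x - y))" by (rule arg_cong[OF e])
    also have "\<dots> \<le> norm M * norm (x - y)" by (rule norm_blinfun)
    finally have "(1 - norm M) * norm (x - y) \<le> 0" by (simp add: algebra_simps)
    then have "norm (x - y) \<le> 0" using k by (simp add: mult_le_0_iff)
    then show ?thesis by simp
  qed
  have surj: "\<exists>x. x - M x = y" for y
  proof -
    have "\<exists>!x. y + M x = x"
    proof (rule banach_fix_type[where c="norm M"])
      show "0 \<le> norm M" "norm M < 1" using k by auto
      show "\<forall>a b. dist (y + M a) (y + M b) \<le> norm M * dist a b"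
        by (auto simp: dist_norm blinfun.diff_right[symmetric] norm_blinfun)
    qed
    then obtain x where "y + M x = x" by blast
    then have "x - M x = y" by (simp add: algebra_simps)
    then show ?thesis by blast
  qed
  define g where "g y = (SOME x. x - M x = y)" for y
  have g: "g y - M (g y) = y" for y unfolding g_def by (rule someI_ex[OF surj])
  have gadd: "g (a + b) = g a + g b" for a b
  proof (rule inj)
    have "(g a + g b) - M (g a + g b) = (g a - M (g a)) + (g b - M (g b))"
      by (simp add: blinfun.add_right algebra_simps)
    also have "\<dots> = a + b" by (simp only: g)
    finally show "g (a + b) - M (g (a + b)) = (g a + g b) - M (g a + g b)" by (simp only: g)
  qed
  have gscale: "g (r *\<^sub>R a) = r *\<^sub>R g a" for r a
    by (rule inj) (simp add: g blinfun.scaleR_right scaleR_diff_right[symmetric])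
  have gbound: "norm (g y) \<le> norm y * (1 / (1 - norm M))" for y
  proof -
    have "g y = y + M (g y)" using g[of y] by (simp add: algebra_simps)
    then have "norm (g y) \<le> norm y + norm (M (g y))" by (metis norm_triangle_ineq)
    also have "\<dots> \<le> norm y + norm M * norm (g y)" using norm_blinfun[of M "g y"] by simp
    finally have "(1 - norm M) * norm (g y) \<le> norm y" by (simp add: algebra_simps)
    then show ?thesis using k by (simp add: field_simps)
  qed
  have bl: "bounded_linear g"
    by (rule bounded_linear_intro[where K="1 / (1 - norm M)"]) (simp_all only: gadd gscale gbound)
  have ga: "blinfun_apply (Blinfun g) = g" by (rule bounded_linear_Blinfun_apply[OF bl])
  show ?thesis
  proof (intro exI[of _ "Blinfun g"] conjI)
    show "Blinfun g o\<^sub>L (id_blinfun - M) = id_blinfun"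
      by (rule blinfun_eqI) (simp add: ga minus_blinfun.rep_eq, rule inj, simp add: g)
    show "(id_blinfun - M) o\<^sub>L Blinfun g = id_blinfun"
      by (rule blinfun_eqI) (simp add: ga minus_blinfun.rep_eq g)
    show "norm (Blinfun g) \<le> 1 / (1 - norm M)"
    proof (rule norm_blinfun_bound)
      show "0 \<le> 1 / (1 - norm M)" using k by simp
      fix x show "norm (blinfun_apply (Blinfun g) x) \<le> 1 / (1 - norm M) * norm x"
        unfolding ga using gbound[of x] by (simp only: mult.commute)
    qed
  qed
qed

lemma op_inv_eq:
  fixes A B :: "'a::chilbert \<Rightarrow>\<^sub>L 'a"
  assumes "B o\<^sub>L A = id_blinfun" "A o\<^sub>L B = id_blinfun"
  shows "op_inv A = B"
  unfolding op_inv_def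
proof (rule the_equality)
  show "B o\<^sub>L A = id_blinfun \<and> A o\<^sub>L B = id_blinfun" using assms by simp
  fix B' assume B': "B' o\<^sub>L A = id_blinfun \<and> A o\<^sub>L B' = id_blinfun"
  show "B' = B"
  proof (rule blinfun_eqI)
    fix y
    have "B' y = B' (A (B y))" using arg_cong[OF assms(2), of "\<lambda>F. blinfun_apply F y"] by simp
    also have "\<dots> = B y" using arg_cong[OF conjunct1[OF B'], of "\<lambda>F. blinfun_apply F (B y)"] by simp
    finally show "B' y = B y" .
  qed
qed

lemma scaleC_comm: "scaleC a (scaleC b (x::'a::chilbert)) = scaleC b (scaleC a x)"
  by (simp add: mult.commute)

lemma resolv:
  fixes A :: "'a::chilbert \<Rightarrow>\<^sub>L 'a"
  assumes nA: "norm A \<le> 1" and w: "cmod w < 2"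
  shows "op_invertible (id_blinfun - opscale (w/2) A)"
    and "\<And>x. op_inv (id_blinfun - opscale (w/2) A) (x - scaleC (w/2) (A x)) = x"
    and "\<And>y. op_inv (id_blinfun - opscale (w/2) A) y
               - scaleC (w/2) (A (op_inv (id_blinfun - opscale (w/2) A) y)) = y"
    and "norm (op_inv (id_blinfun - opscale (w/2) A)) \<le> 1 / (1 - cmod w / 2)"
proof -
  define M where "M = opscale (w/2) A"
  have "norm M \<le> cmod (w/2) * norm A" unfolding M_def by (rule norm_opscale)
  also have "\<dots> \<le> cmod w / 2" using nA by (simp add: norm_divide mult_left_le)
  finally have nM: "norm M \<le> cmod w / 2" .
  then have nM1: "norm M < 1" using w by simp
  obtain B where B: "B o\<^sub>L (id_blinfun - M) = id_blinfun" "(id_blinfun - M) o\<^sub>L B = id_blinfun"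
    "norm B \<le> 1 / (1 - norm M)"
    using inv_exists[OF nM1] by blast
  have inv: "op_inv (id_blinfun - M) = B" by (rule op_inv_eq[OF B(1) B(2)])
  show "op_invertible (id_blinfun - opscale (w/2) A)"
    unfolding op_invertible_def M_def[symmetric] using B by blast
  show "op_inv (id_blinfun - opscale (w/2) A) (x - scaleC (w/2) (A x)) = x" for x
    unfolding M_def[symmetric] inv
    using arg_cong[OF B(1), of "\<lambda>F. blinfun_apply F x"] by (simp add: minus_blinfun.rep_eq M_def)
  show "op_inv (id_blinfun - opscale (w/2) A) y
               - scaleC (w/2) (A (op_inv (id_blinfun - opscale (w/2) A) y)) = y" for y
    unfolding M_def[symmetric] inv
    using arg_cong[OF B(2), of "\<lambda>F. blinfun_apply F y"] by (simp add: minus_blinfun.rep_eq M_def)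
  have "1 / (1 - norm M) \<le> 1 / (1 - cmod w / 2)"
    using nM w nM1 by (intro divide_left_mono mult_pos_pos) auto
  then show "norm (op_inv (id_blinfun - opscale (w/2) A)) \<le> 1 / (1 - cmod w / 2)"
    unfolding M_def[symmetric] inv using B(3) by linarith
qed

lemma resolv_clinear:
  fixes A :: "'a::chilbert \<Rightarrow>\<^sub>L 'a"
  assumes nA: "norm A \<le> 1" and w: "cmod w < 2" and cb: "is_cbounded A"
  shows "op_inv (id_blinfun - opscale (w/2) A) (scaleC c y) = scaleC c (op_inv (id_blinfun - opscale (w/2) A) y)"
proof -
  define R where "R = op_inv (id_blinfun - opscale (w/2) A)"
  have R1: "R (x - scaleC (w/2) (A x)) = x" for x unfolding R_def by (rule resolv(2)[OF nA w])
  have R2: "R y - scaleC (w/2) (A (R y)) = y" for y unfolding R_def by (rule resolv(3)[OF nA w])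
  have "scaleC c (R y) - scaleC (w/2) (A (scaleC c (R y))) = scaleC c (R y - scaleC (w/2) (A (R y)))"
    using cb by (simp add: is_cbounded_def cv.scale_right_diff_distrib scaleC_comm[of "w/2" c])
  also have "\<dots> = scaleC c y" by (simp only: R2)
  finally have "R (scaleC c y) = R (scaleC c (R y) - scaleC (w/2) (A (scaleC c (R y))))" by simp
  also have "\<dots> = scaleC c (R y)" by (rule R1)
  finally show ?thesis unfolding R_def .
qed

lemma resolv_identity:
  fixes A :: "'a::chilbert \<Rightarrow>\<^sub>L 'a"
  assumes nA: "norm A \<le> 1" and w: "cmod w < 2" and z: "cmod z < 2" and cb: "is_cbounded A"
  shows "op_inv (id_blinfun - opscale (w/2) A) x - op_inv (id_blinfun - opscale (z/2) A) x
       = scaleC ((w - z)/2) (op_inv (id_blinfun - opscale (w/2) A) (A (op_inv (id_blinfun - opscale (z/2) A) x)))"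
proof -
  define Rw where "Rw = op_inv (id_blinfun - opscale (w/2) A)"
  define Rz where "Rz = op_inv (id_blinfun - opscale (z/2) A)"
  define nw where "nw v = v - scaleC (w/2) (A v)" for v
  have Rw1: "Rw (nw v) = v" for v unfolding Rw_def nw_def by (rule resolv(2)[OF nA w])
  have Rw2: "nw (Rw y) = y" for y unfolding Rw_def nw_def by (rule resolv(3)[OF nA w])
  have Rz2: "Rz y - scaleC (z/2) (A (Rz y)) = y" for y unfolding Rz_def by (rule resolv(3)[OF nA z])
  have nwdiff: "nw (a - b) = nw a - nw b" for a b
    unfolding nw_def by (simp add: blinfun.diff_right cv.scale_right_diff_distrib)
  have nwscale: "nw (scaleC c a) = scaleC c (nw a)" for c a
    unfolding nw_def using cb
    by (simp add: is_cbounded_def cv.scale_right_diff_distrib scaleC_comm[of "w/2" c])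
  define p where "p = Rz x"
  have hp: "p - scaleC (z/2) (A p) = x" unfolding p_def by (rule Rz2)
  have "nw (Rw x - p) = x - nw p" by (simp add: nwdiff Rw2)
  also have "\<dots> = scaleC ((w - z)/2) (A p)"
    unfolding nw_def
    by (subst hp[symmetric]) (simp add: cv.scale_left_diff_distrib diff_divide_distrib)
  also have "\<dots> = nw (scaleC ((w - z)/2) (Rw (A p)))" by (simp add: nwscale Rw2)
  finally have "Rw (nw (Rw x - p)) = Rw (nw (scaleC ((w - z)/2) (Rw (A p))))" by simp
  then have "Rw x - p = scaleC ((w - z)/2) (Rw (A p))" by (simp only: Rw1)
  then show ?thesis unfolding p_def Rw_def Rz_def .
qed

lemma vec_key:
  fixes A :: "'a::chilbert \<Rightarrow>\<^sub>L 'a" and \<delta> :: real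
  shows "(norm (y - scaleC \<mu> (A y)))^2 - (norm (scaleC (of_real \<delta>) (A y) - scaleC \<mu> y))^2
    = (1 - ((Re \<mu>)^2 + (Im \<mu>)^2)) * (norm y)^2 - (\<delta>^2 - ((Re \<mu>)^2 + (Im \<mu>)^2)) * (norm (A y))^2
      - 2 * (1-\<delta>) * Re \<mu> * Re (cinner y (A y)) + 2 * (1+\<delta>) * Im \<mu> * Im (cinner y (A y))"
proof -
  define a where "a = cinner y (A y)"
  have ca: "cinner (A y) y = cnj a" unfolding a_def by (rule cinner_cnj)
  have n1: "(norm (y - scaleC \<mu> (A y)))^2 = (norm y)^2 + ((Re \<mu>)^2 + (Im \<mu>)^2) * (norm (A y))^2
      - 2 * (Re \<mu> * Re a - Im \<mu> * Im a)"
    using norm_add_sq[of y "- scaleC \<mu> (A y)"]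
    by (simp add: norm_scaleC cinner_minus_right cinner_scaleC_right power_mult_distrib cmod_power2 a_def)
  have n2: "(norm (scaleC (of_real \<delta>) (A y) - scaleC \<mu> y))^2 = \<delta>^2 * (norm (A y))^2
      + ((Re \<mu>)^2 + (Im \<mu>)^2) * (norm y)^2 - 2 * \<delta> * (Re \<mu> * Re a + Im \<mu> * Im a)"
    using norm_add_sq[of "scaleC (of_real \<delta>) (A y)" "- scaleC \<mu> y"]
    by (simp add: norm_scaleC cinner_minus_right cinner_scaleC_right cinner_scaleC_left ca
        power_mult_distrib cmod_power2 algebra_simps)
  show ?thesis unfolding a_def[symmetric] n1 n2 by (simp add: algebra_simps)
qed

lemma m_bound:
  fixes \<delta> p q :: real
  assumes d: "0 < \<delta>" "\<delta> < 1"
    and ell: "4 * (1-\<delta>)^2 * p^2 + 4 * (1+\<delta>)^2 * q^2 < (1 - \<delta>^2)^2"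
  shows "2 * sqrt ((1-\<delta>)^2 * p^2 + (1+\<delta>)^2 * q^2) < 1 - \<delta>^2"
proof -
  define m where "m = sqrt ((1-\<delta>)^2 * p^2 + (1+\<delta>)^2 * q^2)"
  have msq: "m^2 = (1-\<delta>)^2 * p^2 + (1+\<delta>)^2 * q^2" unfolding m_def by simp
  have "m^2 < ((1 - \<delta>^2) / 2)^2" using ell msq by (simp add: power_divide)
  moreover have "0 \<le> (1 - \<delta>^2) / 2" using d by (simp add: power_le_one)
  ultimately have "m < (1 - \<delta>^2) / 2" by (rule power2_less_imp_less)
  then show ?thesis unfolding m_def by simp
qed

lemma ellipse_facts:
  fixes \<delta> :: real
  assumes d: "0 < \<delta>" "\<delta> < 1" and l: "l \<in> G \<delta>"
  shows "4 * (1-\<delta>)^2 * (Re l / 2)^2 + 4 * (1+\<delta>)^2 * (Im l / 2)^2 < (1 - \<delta>^2)^2"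
    and "(Re l / 2)^2 + (Im l / 2)^2 < ((1 + \<delta>) / 2)^2"
    and "cmod l < 2"
proof -
  have a: "(Re l)^2 / (1 + \<delta>)^2 + (Im l)^2 / (1 - \<delta>)^2 < 1" using l by (simp add: G_def)
  have p1: "(1 + \<delta>)^2 > 0" "(1 - \<delta>)^2 > 0" using d by auto
  have "((Re l)^2 / (1 + \<delta>)^2 + (Im l)^2 / (1 - \<delta>)^2) * ((1 + \<delta>)^2 * (1 - \<delta>)^2)
        = (Re l)^2 * (1 - \<delta>)^2 + (Im l)^2 * (1 + \<delta>)^2"
    using p1 by (simp add: field_simps)
  moreover have "((Re l)^2 / (1 + \<delta>)^2 + (Im l)^2 / (1 - \<delta>)^2) * ((1 + \<delta>)^2 * (1 - \<delta>)^2)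
        < 1 * ((1 + \<delta>)^2 * (1 - \<delta>)^2)"
    using a p1 by (intro mult_strict_right_mono) auto
  ultimately have "(Re l)^2 * (1 - \<delta>)^2 + (Im l)^2 * (1 + \<delta>)^2 < (1 - \<delta>^2)^2"
    by (simp add: power2_eq_square algebra_simps)
  then show "4 * (1-\<delta>)^2 * (Re l / 2)^2 + 4 * (1+\<delta>)^2 * (Im l / 2)^2 < (1 - \<delta>^2)^2"
    by (simp add: power_divide algebra_simps)
  have "(Im l)^2 / (1 + \<delta>)^2 \<le> (Im l)^2 / (1 - \<delta>)^2"
    using d p1 by (intro divide_left_mono) (auto simp: power_mono)
  then have "(Re l)^2 / (1 + \<delta>)^2 + (Im l)^2 / (1 + \<delta>)^2 < 1" using a by linarith
  then have b: "(Re l)^2 + (Im l)^2 < (1 + \<delta>)^2"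
    using p1 by (simp add: add_divide_distrib[symmetric] divide_less_eq)
  then show "(Re l / 2)^2 + (Im l / 2)^2 < ((1 + \<delta>) / 2)^2"
    by (simp add: power_divide add_divide_distrib[symmetric] divide_strict_right_mono)
  have "(cmod l)^2 < 2^2"
  proof -
    have "(1 + \<delta>)^2 < 2^2" using d by (intro power_strict_mono) auto
    then show ?thesis using b by (simp add: cmod_power2)
  qed
  then show "cmod l < 2" by (rule power2_less_imp_less) simp
qed

lemma part1_general:
  fixes A :: "'a::chilbert \<Rightarrow>\<^sub>L 'a" and \<delta> :: real
  assumes d: "0 < \<delta>" "\<delta> < 1" and l: "l \<in> G \<delta>" and cb: "is_cbounded A" and nA: "norm A \<le> 1"
  shows "op_invertible (id_blinfun - opscale (l/2) A)"
    and "is_cbounded ((opscale (complex_of_real \<delta>) A - opscale (l / 2) id_blinfun)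
                        o\<^sub>L op_inv (id_blinfun - opscale (l / 2) A))"
    and "norm ((opscale (complex_of_real \<delta>) A - opscale (l / 2) id_blinfun)
                        o\<^sub>L op_inv (id_blinfun - opscale (l / 2) A)) < 1"
proof -
  note E = ellipse_facts[OF d l]
  have w: "cmod l < 2" by (rule E(3))
  show "op_invertible (id_blinfun - opscale (l/2) A)" by (rule resolv(1)[OF nA w])
  define R where "R = op_inv (id_blinfun - opscale (l/2) A)"
  define lam where "lam = (opscale (complex_of_real \<delta>) A - opscale (l / 2) id_blinfun) o\<^sub>L R"
  define \<mu> where "\<mu> = l / 2"
  have lam_apply: "lam x = scaleC (of_real \<delta>) (A (R x)) - scaleC \<mu> (R x)" for x
    unfolding lam_def \<mu>_def by (simp add: minus_blinfun.rep_eq)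
  have R2: "R y - scaleC \<mu> (A (R y)) = y" for y unfolding R_def \<mu>_def by (rule resolv(3)[OF nA w])
  have Rc: "R (scaleC c y) = scaleC c (R y)" for c y
    unfolding R_def by (rule resolv_clinear[OF nA w cb])
  show "is_cbounded ((opscale (complex_of_real \<delta>) A - opscale (l / 2) id_blinfun)
                        o\<^sub>L op_inv (id_blinfun - opscale (l / 2) A))"
    unfolding R_def[symmetric] lam_def[symmetric] is_cbounded_def
    using cb by (simp add: lam_apply Rc is_cbounded_def cv.scale_right_diff_distrib mult.commute)
  have Ale: "norm (A v) \<le> norm v" for v
  proof -
    have "norm A * norm v \<le> 1 * norm v" by (rule mult_right_mono[OF nA]) simp
    then show ?thesis using norm_blinfun[of A v] by simp
  qed
  define p where "p = Re \<mu>"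
  define q where "q = Im \<mu>"
  define \<mu>2 where "\<mu>2 = p^2 + q^2"
  define h0 where "h0 = min (1 - \<mu>2) (1 + \<delta>^2 - 2 * \<mu>2)"
  define m where "m = sqrt ((1-\<delta>)^2 * p^2 + (1+\<delta>)^2 * q^2)"
  define c where "c = min h0 (1 - \<delta>^2 - 2 * m)"
  have ell: "4 * (1-\<delta>)^2 * p^2 + 4 * (1+\<delta>)^2 * q^2 < (1 - \<delta>^2)^2"
    using E(1) unfolding p_def q_def \<mu>_def by simp
  have mu2: "\<mu>2 < ((1 + \<delta>) / 2)^2" using E(2) unfolding \<mu>2_def p_def q_def \<mu>_def by simp
  have "2 * m < 1 - \<delta>^2" unfolding m_def by (rule m_bound[OF d ell])
  moreover have "1 - \<mu>2 > 0"
  proof -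
    have "((1 + \<delta>) / 2)^2 < 1^2" using d by (intro power_strict_mono) auto
    then show ?thesis using mu2 by simp
  qed
  moreover have "1 + \<delta>^2 - 2 * \<mu>2 > 0"
  proof -
    have "1 + \<delta>^2 - 2 * ((1 + \<delta>) / 2)^2 = (1 - \<delta>)^2 / 2"
      by (simp add: power2_eq_square field_simps)
    moreover have "(1 - \<delta>)^2 / 2 \<ge> 0" by simp
    ultimately have "2 * ((1 + \<delta>) / 2)^2 \<le> 1 + \<delta>^2" by linarith
    then show ?thesis using mu2 by linarith
  qed
  ultimately have c0: "c > 0" unfolding c_def h0_def by simp
  have c1: "c \<le> 1" unfolding c_def h0_def \<mu>2_def by (simp add: min_le_iff_disj)
  have key: "(norm (scaleC (of_real \<delta>) (A y) - scaleC \<mu> y))^2 + c * (norm y)^2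
              \<le> (norm (y - scaleC \<mu> (A y)))^2" for y
  proof -
    define a where "a = cinner y (A y)"
    have RY: "0 \<le> norm (A y)" "norm (A y) \<le> norm y"
      using Ale[of y] by auto
    have "(Re a)^2 + (Im a)^2 = (cmod a)^2" by (simp add: cmod_power2)
    also have "\<dots> \<le> (norm y * norm (A y))^2"
      unfolding a_def by (intro power_mono cauchy_schwarz) simp
    finally have st: "(Re a)^2 + (Im a)^2 \<le> (norm (A y) * norm y)^2" by (simp add: mult.commute)
    have "c * (norm y)^2 \<le> (1 - (p^2+q^2)) * (norm y)^2 - (\<delta>^2 - (p^2+q^2)) * (norm (A y))^2
           - 2 * (1-\<delta>) * p * Re a + 2 * (1+\<delta>) * q * Im a"
    proof (rule real_key[OF d RY st ell, of h0 c])
      show "h0 \<le> 1 - (p^2 + q^2)" "h0 \<le> 1 + \<delta>^2 - 2 * (p^2 + q^2)"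
        by (simp_all add: h0_def \<mu>2_def)
      show "c \<le> h0" by (simp add: c_def)
      show "c \<le> 1 - \<delta>^2 - 2 * sqrt ((1-\<delta>)^2 * p^2 + (1+\<delta>)^2 * q^2)"
        by (simp add: c_def m_def)
      show "0 \<le> c" using c0 by simp
    qed
    also have "\<dots> = (norm (y - scaleC \<mu> (A y)))^2 - (norm (scaleC (of_real \<delta>) (A y) - scaleC \<mu> y))^2"
      unfolding vec_key p_def q_def a_def ..
    finally show ?thesis by simp
  qed
  define K where "K = sqrt (1 - c / 4)"
  have K1: "K < 1" unfolding K_def using c0 by simp
  have "norm lam \<le> K"
  proof (rule norm_blinfun_bound)
    show "0 \<le> K" unfolding K_def using c1 by simp
    fix z
    define y where "y = R z"
    have zy: "z = y - scaleC \<mu> (A y)" unfolding y_def using R2[of z] by simp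
    have "norm z \<le> norm y + norm (scaleC \<mu> (A y))" unfolding zy by (rule norm_triangle_ineq4)
    also have "norm (scaleC \<mu> (A y)) \<le> norm y"
    proof -
      have "cmod \<mu> \<le> 1" using w unfolding \<mu>_def by (simp add: norm_divide)
      moreover have "norm (A y) \<le> norm y" by (rule Ale)
      ultimately have "cmod \<mu> * norm (A y) \<le> 1 * norm y"
        by (intro mult_mono) auto
      then show ?thesis by (simp add: norm_scaleC)
    qed
    finally have "norm z \<le> 2 * norm y" by simp
    then have z2: "(norm z)^2 \<le> 4 * (norm y)^2"
      using power_mono[of "norm z" "2 * norm y" 2] by (simp add: power_mult_distrib)
    have "(norm (lam z))^2 \<le> (norm z)^2 - c * (norm y)^2"
      using key[of y] unfolding lam_apply y_def[symmetric] zy[symmetric] by simp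
    also have "\<dots> \<le> (norm z)^2 - c / 4 * (norm z)^2"
      using z2 c0 by (simp add: field_simps)
    also have "\<dots> = (K * norm z)^2"
      unfolding K_def using c1 by (simp add: power_mult_distrib algebra_simps)
    finally have "(norm (lam z))^2 \<le> (K * norm z)^2" .
    then show "norm (lam z) \<le> K * norm z"
    proof (rule power2_le_imp_le)
      have "0 \<le> K" unfolding K_def using c1 by simp
      then show "0 \<le> K * norm z" by simp
    qed
  qed
  then show "norm ((opscale (complex_of_real \<delta>) A - opscale (l / 2) id_blinfun)
                        o\<^sub>L op_inv (id_blinfun - opscale (l / 2) A)) < 1"
    using K1 unfolding lam_def R_def by simp
qed

lemma alg_step:
  fixes A :: "'a::chilbert \<Rightarrow>\<^sub>L 'a" and a b d :: complex
  assumes cb: "is_cbounded A" and Rw: "rw = rz + scaleC (a - b) v"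
  shows "(scaleC d (A rw) - scaleC a rw) - (scaleC d (A rz) - scaleC b rz)
       = scaleC (a - b) (scaleC d (A v) - scaleC b v - rw)"
proof -
  have Av: "A (scaleC (a - b) v) = scaleC (a - b) (A v)" using cb by (simp add: is_cbounded_def)
  have Arw: "A rw = A rz + scaleC (a - b) (A v)" unfolding Rw by (simp add: blinfun.add_right Av)
  show ?thesis unfolding Arw unfolding Rw
    by (simp add: blinfun.add_right Av cv.scale_right_distrib cv.scale_left_distrib
        cv.scale_right_diff_distrib cv.scale_left_diff_distrib algebra_simps)
qed


lemma diff_quot:
  fixes A :: "'a::chilbert \<Rightarrow>\<^sub>L 'a" and \<delta> :: real
  assumes cb: "is_cbounded A" and nA: "norm A \<le> 1" and w: "cmod w < 2" and z: "cmod z < 2"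
    and wz: "w \<noteq> z"
  defines "F \<equiv> \<lambda>w. (opscale (complex_of_real \<delta>) A - opscale (w / 2) id_blinfun)
                        o\<^sub>L op_inv (id_blinfun - opscale (w / 2) A)"
    and "R \<equiv> \<lambda>w. op_inv (id_blinfun - opscale (w / 2) A)"
  shows "opscale (inverse (w - z)) (F w - F z)
       = scaleR (1/2) (((opscale (complex_of_real \<delta>) A - opscale (z / 2) id_blinfun) o\<^sub>L (R w o\<^sub>L (A o\<^sub>L R z))) - R w)"
proof (rule blinfun_eqI)
  fix x
  define v where "v = R w (A (R z x))"
  have Rw: "R w x = R z x + scaleC (w/2 - z/2) v"
    using resolv_identity[OF nA w z cb, of x] unfolding R_def v_def
    by (simp add: diff_divide_distrib algebra_simps)
  have Fx: "F u x = scaleC (of_real \<delta>) (A (R u x)) - scaleC (u/2) (R u x)" for u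
    unfolding F_def R_def by (simp add: minus_blinfun.rep_eq)
  have "F w x - F z x = scaleC (w/2 - z/2) (scaleC (of_real \<delta>) (A v) - scaleC (z/2) v - R w x)"
    unfolding Fx by (rule alg_step[OF cb Rw])
  moreover have "inverse (w - z) * (w/2 - z/2) = 1/2" using wz by (simp add: field_simps)
  ultimately have "scaleC (inverse (w - z)) (F w x - F z x)
      = scaleC (1/2) (scaleC (of_real \<delta>) (A v) - scaleC (z/2) v - R w x)"
    by simp
  also have "\<dots> = scaleR (1/2) (scaleC (of_real \<delta>) (A v) - scaleC (z/2) v - R w x)"
    using scaleC_of_real[of "1/2"] by simp
  finally show "opscale (inverse (w - z)) (F w - F z) x
       = scaleR (1/2) (((opscale (complex_of_real \<delta>) A - opscale (z / 2) id_blinfun) o\<^sub>L (R w o\<^sub>L (A o\<^sub>L R z))) - R w) x"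
    by (simp add: minus_blinfun.rep_eq scaleR_blinfun.rep_eq v_def)
qed

lemma R_cont:
  fixes A :: "'a::chilbert \<Rightarrow>\<^sub>L 'a"
  assumes cb: "is_cbounded A" and nA: "norm A \<le> 1" and z: "cmod z < 2"
  shows "((\<lambda>w. op_inv (id_blinfun - opscale (w / 2) A)) \<longlongrightarrow> op_inv (id_blinfun - opscale (z / 2) A)) (at z)"
proof -
  define R where "R = (\<lambda>w. op_inv (id_blinfun - opscale (w / 2) A))"
  define \<rho> where "\<rho> = (2 + cmod z) / 2"
  have \<rho>: "\<rho> < 2" "cmod z < \<rho>" using z unfolding \<rho>_def by auto
  define K where "K = 1 / (1 - \<rho> / 2)"
  define C where "C = K * norm (R z) / 2"
  have ev: "eventually (\<lambda>w. cmod w < \<rho>) (at z)"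
  proof -
    have "eventually (\<lambda>w. w \<in> ball z (\<rho> - cmod z)) (at z)"
      using \<rho> by (intro eventually_at_in_open') auto
    then show ?thesis
    proof (rule eventually_mono)
      fix w assume "w \<in> ball z (\<rho> - cmod z)"
      then have "cmod (w - z) < \<rho> - cmod z" by (simp add: dist_norm norm_minus_commute)
      moreover have "cmod w \<le> cmod z + cmod (w - z)" using norm_triangle_ineq2[of w z] by simp
      ultimately show "cmod w < \<rho>" by simp
    qed
  qed
  have bound: "norm (R w - R z) \<le> C * cmod (w - z)" if w: "cmod w < \<rho>" for w
  proof (rule norm_blinfun_bound)
    have w2: "cmod w < 2" using w \<rho> by simp
    have nRw: "norm (R w) \<le> K"
    proof -
      have "norm (R w) \<le> 1 / (1 - cmod w / 2)" unfolding R_def by (rule resolv(4)[OF nA w2])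
      also have "\<dots> \<le> K" unfolding K_def using w \<rho> by (intro divide_left_mono mult_pos_pos) auto
      finally show ?thesis .
    qed
    have K0: "0 \<le> K" unfolding K_def using \<rho> by simp
    show "0 \<le> C * cmod (w - z)" unfolding C_def using K0 by simp
    fix x
    have "(R w - R z) x = scaleC ((w - z)/2) (R w (A (R z x)))"
      unfolding R_def minus_blinfun.rep_eq using resolv_identity[OF nA w2 z cb, of x] by simp
    then have eq: "norm ((R w - R z) x) = cmod ((w - z)/2) * norm (R w (A (R z x)))"
      by (simp add: norm_scaleC)
    have le1: "norm (R w (A (R z x))) \<le> K * (norm A * (norm (R z) * norm x))"
    proof -
      have "norm (R w (A (R z x))) \<le> norm (R w) * norm (A (R z x))" by (rule norm_blinfun)
      also have "\<dots> \<le> K * (norm A * (norm (R z) * norm x))"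
        using nRw K0 by (intro mult_mono order_trans[OF norm_blinfun] mult_left_mono norm_blinfun) auto
      finally show ?thesis .
    qed
    have le2: "K * (norm A * (norm (R z) * norm x)) \<le> K * (1 * (norm (R z) * norm x))"
      using nA K0 by (intro mult_left_mono mult_right_mono) auto
    have "norm ((R w - R z) x) \<le> cmod ((w - z)/2) * (K * (norm (R z) * norm x))"
      unfolding eq using le1 le2 by (intro mult_left_mono) auto
    then show "norm ((R w - R z) x) \<le> C * cmod (w - z) * norm x"
      unfolding C_def by (simp add: norm_divide mult_ac)
  qed
  have "((\<lambda>w. R w - R z) \<longlongrightarrow> 0) (at z)"
  proof (rule Lim_null_comparison)
    show "eventually (\<lambda>w. norm (R w - R z) \<le> C * cmod (w - z)) (at z)"
      using ev by (rule eventually_mono) (rule bound)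
    show "((\<lambda>w. C * cmod (w - z)) \<longlongrightarrow> 0) (at z)"
      by (rule tendsto_eq_intros refl | simp)+
  qed
  then show ?thesis unfolding R_def by (simp add: Lim_null[symmetric])
qed

theorem lemma2p7:
  fixes \<delta> :: real
  assumes "0 < \<delta>" and "\<delta> < 1"
  shows "(\<forall>l\<in>G \<delta>. \<forall>T :: 'a::chilbert \<Rightarrow>\<^sub>L 'a. is_contraction T \<longrightarrow>
            op_invertible (id_blinfun - opscale (l / 2) (adj T)) \<and>
            is_cbounded (lamT \<delta> l T) \<and> norm (lamT \<delta> l T) < 1)
       \<and> (\<forall>T :: 'a \<Rightarrow>\<^sub>L 'a. is_contraction T \<longrightarrow>
            op_holomorphic_on (\<lambda>l. lamT \<delta> l T) (G \<delta>))"
proof (intro conjI ballI allI impI)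
  note d = assms
  fix T :: "'a \<Rightarrow>\<^sub>L 'a"
  assume cT: "is_contraction T"
  have cb: "is_cbounded T" and nT: "norm T \<le> 1" using cT by (auto simp: is_contraction_def)
  have cbA: "is_cbounded (adj T)" by (rule adj_cbounded[OF cb])
  have nA: "norm (adj T) \<le> 1" using norm_adj[OF cb] nT by linarith
  {
    fix l assume l: "l \<in> G \<delta>"
    note P = part1_general[OF d l cbA nA]
    show "op_invertible (id_blinfun - opscale (l / 2) (adj T))" by (rule P(1))
    show "is_cbounded (lamT \<delta> l T)" unfolding lamT_def by (rule P(2))
    show "norm (lamT \<delta> l T) < 1" unfolding lamT_def by (rule P(3))
  }
  show "op_holomorphic_on (\<lambda>l. lamT \<delta> l T) (G \<delta>)"
    unfolding op_holomorphic_on_def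
  proof
    fix z assume zG: "z \<in> G \<delta>"
    have z: "cmod z < 2" by (rule ellipse_facts(3)[OF d zG])
    define A where "A = adj T"
    define R where "R = (\<lambda>w. op_inv (id_blinfun - opscale (w / 2) A))"
    define Ez where "Ez = opscale (complex_of_real \<delta>) A - opscale (z / 2) id_blinfun"
    define g where "g = (\<lambda>w. scaleR (1/2) ((Ez o\<^sub>L (R w o\<^sub>L (A o\<^sub>L R z))) - R w))"
    have ev: "eventually (\<lambda>w. opscale (inverse (w - z)) (lamT \<delta> w T - lamT \<delta> z T) = g w) (at z)"
      unfolding eventually_at
    proof (intro exI[of _ "2 - cmod z"] conjI ballI impI)
      show "0 < 2 - cmod z" using z by simp
      fix w :: complex assume w: "w \<noteq> z \<and> dist w z < 2 - cmod z"
      have "cmod w \<le> cmod z + cmod (w - z)" using norm_triangle_ineq2[of w z] by simp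
      then have w2: "cmod w < 2" using w by (simp add: dist_norm)
      show "opscale (inverse (w - z)) (lamT \<delta> w T - lamT \<delta> z T) = g w"
        unfolding lamT_def g_def Ez_def R_def A_def
        by (rule diff_quot[OF cbA nA w2 z]) (use w in simp)
    qed
    have Rc: "(R \<longlongrightarrow> R z) (at z)" unfolding R_def A_def by (rule R_cont[OF cbA nA z])
    have "(g \<longlongrightarrow> scaleR (1/2) ((Ez o\<^sub>L (R z o\<^sub>L (A o\<^sub>L R z))) - R z)) (at z)"
      unfolding g_def
      by (intro tendsto_scaleR tendsto_const tendsto_diff Rc
          bounded_bilinear.tendsto[OF bounded_bilinear_blinfun_compose])
    then show "\<exists>D. ((\<lambda>w. opscale (inverse (w - z)) (lamT \<delta> w T - lamT \<delta> z T)) \<longlongrightarrow> D) (at z)"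
      using tendsto_cong[OF ev] by blast
  qed
qed

end
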